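(* If a $T_1$-space $X$ has a strong development at non-isolated points, then $X$ is monotonically normal and paracompact.
   Context: $I(X)$ is the set of isolated points, $\mathcal{I}(X)=\{\{x\}:x\in I(X)\}$, and $\mathrm{st}(A,\mathcal{W})=\bigcup\{W\in\mathcal{W}:W\cap A\neq\emptyset\}$. A sequence $\{\mathcal{W}_i\}_{i\in\mathbb{N}}$ of open covers of $X$ with $\mathcal{I}(X)\subset\bigcup_i\mathcal{W}_i$ is a strong development at non-isolated points if for every $x\in X\setminus I(X)$ and every neighborhood $U$ of $x$ there are a neighborhood $V$ of $x$ and $i\in\mathbb{N}$ with $\mathrm{st}(V,\mathcal{W}_i)\subset U$. $X$ is monotonically normal if to each pair $(p,C)$ with $C$ closed and $p\notin C$ one can assign an open set $H(p,C)$ with (i) $p\in H(p,C)\subset X\setminus C$; (ii) if $D\subset C$ is closed then $H(p,C)\subset H(p,D)$; (iii) if $p\neq q$ then $H(p,\{q\})\cap H(q,\{p\})=\emptyset$. *)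

theory Defs
  imports "HOL-Analysis.Analysis"
begin

definition isolated_pts :: "'a::topological_space set" where
  "isolated_pts = {x. open {x}}"

definition star :: "'a set \<Rightarrow> 'a set set \<Rightarrow> 'a set" where
  "star A \<W> = \<Union>{W \<in> \<W>. W \<inter> A \<noteq> {}}"

definition open_cover :: "'a::topological_space set set \<Rightarrow> bool" where
  "open_cover \<W> \<longleftrightarrow> (\<forall>W\<in>\<W>. open W) \<and> \<Union>\<W> = UNIV"

definition strong_development_nonisolated ::
  "(nat \<Rightarrow> 'a::topological_space set set) \<Rightarrow> bool" where
  "strong_development_nonisolated \<W> \<longleftrightarrow>
     (\<forall>i. open_cover (\<W> i)) \<and>
     {{x} | x. x \<in> isolated_pts} \<subseteq> (\<Union>i. \<W> i) \<and>
     (\<forall>x. x \<notin> isolated_pts \<longrightarrow>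
        (\<forall>U. open U \<and> x \<in> U \<longrightarrow>
           (\<exists>V i. open V \<and> x \<in> V \<and> star V (\<W> i) \<subseteq> U)))"

definition has_strong_development_nonisolated :: "'a::topological_space itself \<Rightarrow> bool" where
  "has_strong_development_nonisolated _ \<longleftrightarrow>
     (\<exists>\<W> :: nat \<Rightarrow> 'a set set. strong_development_nonisolated \<W>)"

definition monotonically_normal :: "'a::topological_space itself \<Rightarrow> bool" where
  "monotonically_normal _ \<longleftrightarrow>
     (\<exists>H :: 'a \<Rightarrow> 'a set \<Rightarrow> 'a set.
        (\<forall>p C. closed C \<and> p \<notin> C \<longrightarrow> open (H p C) \<and> p \<in> H p C \<and> H p C \<subseteq> - C) \<and>
        (\<forall>p C D. closed C \<and> closed D \<and> D \<subseteq> C \<and> p \<notin> C \<longrightarrow> H p C \<subseteq> H p D) \<and>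
        (\<forall>p q. p \<noteq> q \<longrightarrow> H p {q} \<inter> H q {p} = {}))"

definition locally_finite_family :: "'a::topological_space set set \<Rightarrow> bool" where
  "locally_finite_family \<V> \<longleftrightarrow>
     (\<forall>x. \<exists>N. open N \<and> x \<in> N \<and> finite {V \<in> \<V>. V \<inter> N \<noteq> {}})"

text \<open>Paracompact (Engelking convention): Hausdorff, and every open cover has a
  locally finite open refinement.\<close>
definition paracompact :: "'a::topological_space itself \<Rightarrow> bool" where
  "paracompact _ \<longleftrightarrow>
     (\<forall>x y :: 'a. x \<noteq> y \<longrightarrow> (\<exists>U V. open U \<and> open V \<and> x \<in> U \<and> y \<in> V \<and> U \<inter> V = {})) \<and>
     (\<forall>\<U> :: 'a set set. open_cover \<U> \<longrightarrow>
        (\<exists>\<V>. open_cover \<V> \<and> (\<forall>V\<in>\<V>. \<exists>U\<in>\<U>. V \<subseteq> U) \<and> locally_finite_family \<V>))"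

end

theory Submission
  imports Defs
begin


lemma first_exists:
  fixes \<U> :: "'a set set"
  assumes "\<Union>\<U> = UNIV"
  shows "\<exists>f. (\<forall>x. x \<in> f x \<and> f x \<in> \<U>) \<and> (\<forall>y z. f y \<noteq> f z \<longrightarrow> z \<notin> f y \<or> y \<notin> f z)"
proof -
  obtain r :: "'a set rel" where r: "Well_order r" "Field r = UNIV" using well_ordering[where 'a="'a set"] by blast
  have wf: "wf (r - Id)" and tot: "total_on UNIV r"
    using r unfolding well_order_on_def linear_order_on_def by auto
  define f where "f x = (SOME U. U \<in> \<U> \<and> x \<in> U \<and> (\<forall>V. (V,U) \<in> r - Id \<longrightarrow> \<not>(V \<in> \<U> \<and> x \<in> V)))" for x
  have f: "f x \<in> \<U> \<and> x \<in> f x \<and> (\<forall>V. (V,f x) \<in> r - Id \<longrightarrow> \<not>(V \<in> \<U> \<and> x \<in> V))" for x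
  proof -
    obtain U0 where "U0 \<in> \<U>" "x \<in> U0" using assms by (metis UNIV_I Union_iff)
    then have U0: "U0 \<in> {U \<in> \<U>. x \<in> U}" by simp
    have "\<exists>z\<in>{U \<in> \<U>. x \<in> U}. \<forall>y. (y, z) \<in> r - Id \<longrightarrow> y \<notin> {U \<in> \<U>. x \<in> U}"
      using wf_eq_minimal[THEN iffD1, OF wf, rule_format, OF U0] .
    then have "\<exists>U. U \<in> \<U> \<and> x \<in> U \<and> (\<forall>V. (V,U) \<in> r - Id \<longrightarrow> \<not>(V \<in> \<U> \<and> x \<in> V))" by auto
    then show ?thesis unfolding f_def by (rule someI_ex)
  qed
  have "f y \<noteq> f z \<longrightarrow> z \<notin> f y \<or> y \<notin> f z" for y z
  proof
    assume ne: "f y \<noteq> f z"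
    have "(f y, f z) \<in> r \<or> (f z, f y) \<in> r" using tot ne unfolding total_on_def by simp
    then have "(f y, f z) \<in> r - Id \<or> (f z, f y) \<in> r - Id" using ne by simp
    then show "z \<notin> f y \<or> y \<notin> f z"
    proof
      assume "(f y, f z) \<in> r - Id"
      then have "\<not> (f y \<in> \<U> \<and> z \<in> f y)" using f[of z] by simp
      then show ?thesis using f[of y] by simp
    next
      assume "(f z, f y) \<in> r - Id"
      then have "\<not> (f z \<in> \<U> \<and> y \<in> f z)" using f[of y] by simp
      then show ?thesis using f[of z] by simp
    qed
  qed
  then show ?thesis using f by blast
qed

locale sdev =
  fixes W :: "nat \<Rightarrow> 'a::t1_space set set"
  assumes sd: "strong_development_nonisolated W"
begin

definition Rr :: "nat \<Rightarrow> 'a \<Rightarrow> 'a \<Rightarrow> bool" where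
  "Rr i a b \<longleftrightarrow> (\<forall>k\<le>i. \<exists>w\<in>W k. a \<in> w \<and> b \<in> w)"

fun Ch :: "nat \<Rightarrow> nat \<Rightarrow> 'a \<Rightarrow> 'a \<Rightarrow> bool" where
  "Ch i 0 x y = (x = y)"
| "Ch i (Suc k) x y = (\<exists>z. Ch i k x z \<and> Rr i z y)"

definition Bb :: "nat \<Rightarrow> 'a \<Rightarrow> 'a set" where
  "Bb i x = {y. Rr i x y}"

lemma oc: "open_cover (W k)"
  using sd unfolding strong_development_nonisolated_def by simp

lemma W_open: "w \<in> W k \<Longrightarrow> open w"
  using oc[of k] unfolding open_cover_def by simp

lemma W_cov: "\<exists>w\<in>W k. x \<in> w"
proof -
  have "\<Union>(W k) = UNIV" using oc[of k] unfolding open_cover_def by simp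
  then have "x \<in> \<Union>(W k)" by simp
  then show ?thesis by (simp only: Union_iff)
qed

lemma strong:
  assumes "x \<notin> isolated_pts" "open U" "x \<in> U"
  shows "\<exists>V i. open V \<and> x \<in> V \<and> (\<forall>w\<in>W i. w \<inter> V \<noteq> {} \<longrightarrow> w \<subseteq> U)"
proof -
  have "\<forall>x. x \<notin> isolated_pts \<longrightarrow> (\<forall>U. open U \<and> x \<in> U \<longrightarrow> (\<exists>V i. open V \<and> x \<in> V \<and> star V (W i) \<subseteq> U))"
    using sd unfolding strong_development_nonisolated_def by simp
  then obtain V i where "open V" "x \<in> V" "star V (W i) \<subseteq> U"
    using assms by blast
  moreover have "\<forall>w\<in>W i. w \<inter> V \<noteq> {} \<longrightarrow> w \<subseteq> U"
  proof (intro ballI impI)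
    fix w assume "w \<in> W i" "w \<inter> V \<noteq> {}"
    then have "w \<subseteq> star V (W i)" unfolding star_def by auto
    then show "w \<subseteq> U" using \<open>star V (W i) \<subseteq> U\<close> by simp
  qed
  ultimately show ?thesis by blast
qed

lemma Rr_refl: "Rr i x x"
  unfolding Rr_def using W_cov by blast

lemma Rr_sym: "Rr i x y \<Longrightarrow> Rr i y x"
  unfolding Rr_def by blast

lemma Rr_mono: "Rr j x y \<Longrightarrow> i \<le> j \<Longrightarrow> Rr i x y"
  unfolding Rr_def by auto

lemma Bb_open: "open (Bb i x)"
proof -
  have "Bb i x = (\<Inter>k\<in>{..i}. \<Union>{w\<in>W k. x\<in>w})"
    unfolding Bb_def Rr_def by auto
  moreover have "open (\<Union>{w\<in>W k. x\<in>w})" for k using W_open by blast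
  ultimately show ?thesis by auto
qed

lemma Ch_mono: "Ch j k x y \<Longrightarrow> i \<le> j \<Longrightarrow> Ch i k x y"
  by (induction k arbitrary: y) (auto intro: Rr_mono)

lemma Ch2: "Rr i a b \<Longrightarrow> Rr i b c \<Longrightarrow> Ch i 2 a c"
  by (auto simp: numeral_2_eq_2)

lemma Ch4: "Rr i a b \<Longrightarrow> Rr i b c \<Longrightarrow> Rr i c d \<Longrightarrow> Rr i d e \<Longrightarrow> Ch i 4 a e"
  by (simp add: eval_nat_numeral) blast

lemma P:
  assumes "x \<notin> isolated_pts"
  shows "open U \<Longrightarrow> x \<in> U \<Longrightarrow> \<exists>n. \<forall>y. Ch n k x y \<longrightarrow> y \<in> U"
proof (induction k arbitrary: U)
  case 0
  then show ?case by auto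
next
  case (Suc k)
  obtain V i where V: "open V" "x \<in> V" "\<And>w. w\<in>W i \<Longrightarrow> w \<inter> V \<noteq> {} \<Longrightarrow> w \<subseteq> U"
    using strong[OF assms Suc.prems] by blast
  obtain n where n: "\<And>y. Ch n k x y \<Longrightarrow> y \<in> V" using Suc.IH[OF V(1,2)] by blast
  have "Ch (max n i) (Suc k) x y \<Longrightarrow> y \<in> U" for y
  proof -
    assume "Ch (max n i) (Suc k) x y"
    then obtain z where z: "Ch (max n i) k x z" "Rr (max n i) z y" by auto
    have "z \<in> V" using n Ch_mono[OF z(1)] by simp
    moreover obtain w where "w \<in> W i" "z \<in> w" "y \<in> w" using z(2) unfolding Rr_def by (meson max.cobounded2)
    ultimately show "y \<in> U" using V(3) by blast
  qed
  then show ?case by blast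
qed

subsection \<open>Monotone normality\<close>

definition nn :: "'a \<Rightarrow> 'a set \<Rightarrow> nat" where
  "nn p C = (LEAST n. \<forall>y. Ch n 2 p y \<longrightarrow> y \<notin> C)"

definition HH :: "'a \<Rightarrow> 'a set \<Rightarrow> 'a set" where
  "HH p C = (if p \<in> isolated_pts then {p} else Bb (nn p C) p)"

lemma nn_prop:
  assumes "p \<notin> isolated_pts" "closed C" "p \<notin> C"
  shows "\<forall>y. Ch (nn p C) 2 p y \<longrightarrow> y \<notin> C"
proof -
  have "\<exists>n. \<forall>y. Ch n 2 p y \<longrightarrow> y \<in> - C"
    using P[OF assms(1), of "- C" 2] assms(2,3) by (simp add: open_Compl)
  then have "\<exists>n. \<forall>y. Ch n 2 p y \<longrightarrow> y \<notin> C" by simp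
  then show ?thesis unfolding nn_def by (rule LeastI_ex)
qed

lemma HH1:
  assumes "closed C" "p \<notin> C"
  shows "open (HH p C) \<and> p \<in> HH p C \<and> HH p C \<subseteq> - C"
proof (cases "p \<in> isolated_pts")
  case True
  then show ?thesis using assms unfolding HH_def isolated_pts_def by auto
next
  case False
  have "HH p C \<subseteq> - C"
  proof
    fix y assume "y \<in> HH p C"
    then have "Rr (nn p C) p y" using False unfolding HH_def Bb_def by auto
    then have "Ch (nn p C) 2 p y" using Ch2 Rr_refl by blast
    then show "y \<in> - C" using nn_prop[OF False assms] by auto
  qed
  then show ?thesis using False Bb_open Rr_refl unfolding HH_def Bb_def by auto
qed

lemma HH2:
  assumes "closed C" "closed D" "D \<subseteq> C" "p \<notin> C"
  shows "HH p C \<subseteq> HH p D"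
proof (cases "p \<in> isolated_pts")
  case True
  then show ?thesis unfolding HH_def by auto
next
  case False
  have "\<forall>y. Ch (nn p C) 2 p y \<longrightarrow> y \<notin> D" using nn_prop[OF False assms(1,4)] assms(3) by blast
  then have "nn p D \<le> nn p C" unfolding nn_def[of p D] by (rule Least_le)
  then show ?thesis using False unfolding HH_def Bb_def by (auto intro: Rr_mono)
qed

lemma HH3:
  assumes "p \<noteq> q"
  shows "HH p {q} \<inter> HH q {p} = {}"
proof -
  have cq: "closed {q}" and cp: "closed {p}" by auto
  show ?thesis
  proof (cases "p \<in> isolated_pts")
    case True
    then show ?thesis using HH1[OF cp, of q] assms unfolding HH_def by auto
  next
    case pF: False
    show ?thesis
    proof (cases "q \<in> isolated_pts")
      case True
      then show ?thesis using HH1[OF cq, of p] assms unfolding HH_def by auto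
    next
      case qF: False
      show ?thesis
      proof (rule ccontr)
        assume "HH p {q} \<inter> HH q {p} \<noteq> {}"
        then obtain z where z: "Rr (nn p {q}) p z" "Rr (nn q {p}) q z"
          using pF qF unfolding HH_def Bb_def by auto
        have np: "\<forall>y. Ch (nn p {q}) 2 p y \<longrightarrow> y \<notin> {q}" using nn_prop[OF pF cq] assms by auto
        have nq: "\<forall>y. Ch (nn q {p}) 2 q y \<longrightarrow> y \<notin> {p}" using nn_prop[OF qF cp] assms by auto
        show False
        proof (cases "nn p {q} \<le> nn q {p}")
          case True
          then have "Rr (nn p {q}) z q" using z(2) Rr_mono Rr_sym by blast
          then show False using np Ch2[OF z(1)] by blast
        next
          case False
          then have "Rr (nn q {p}) z p" using z(1) Rr_mono Rr_sym by (meson nat_le_linear)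
          then show False using nq Ch2[OF z(2)] by blast
        qed
      qed
    qed
  qed
qed


subsection \<open>Paracompactness\<close>

definition Vc :: "('a \<Rightarrow> 'a set) \<Rightarrow> nat \<Rightarrow> 'a set \<Rightarrow> 'a set \<Rightarrow> 'a set" where
  "Vc f n E s = \<Union>{Bb n y | y. y \<notin> isolated_pts \<and> f y = s \<and> y \<notin> E \<and> (\<forall>z. Ch n 4 y z \<longrightarrow> z \<in> s)}"

primrec Cov :: "('a \<Rightarrow> 'a set) \<Rightarrow> nat \<Rightarrow> 'a set" where
  "Cov f 0 = {}"
| "Cov f (Suc n) = Cov f n \<union> (\<Union>s. Vc f n (Cov f n) s)"

definition VV :: "('a \<Rightarrow> 'a set) \<Rightarrow> nat \<Rightarrow> 'a set \<Rightarrow> 'a set" where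
  "VV f n s = Vc f n (Cov f n) s"

lemma Cov_mono: "j \<le> n \<Longrightarrow> Cov f j \<subseteq> Cov f n"
  by (rule lift_Suc_mono_le[of "Cov f"]) auto

lemma VV_Cov: "j < i \<Longrightarrow> VV f j s \<subseteq> Cov f i"
proof -
  assume "j < i"
  have "VV f j s \<subseteq> Cov f (Suc j)" unfolding VV_def by auto
  also have "\<dots> \<subseteq> Cov f i" by (rule Cov_mono[OF Suc_leI[OF \<open>j < i\<close>]])
  finally show ?thesis .
qed

lemma mem_VV:
  assumes "q \<in> VV f i t"
  shows "\<exists>z. z \<notin> isolated_pts \<and> f z = t \<and> z \<notin> Cov f i \<and> (\<forall>w. Ch i 4 z w \<longrightarrow> w \<in> t) \<and> Rr i z q"
  using assms unfolding VV_def Vc_def Bb_def by auto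

lemma VV_open: "open (VV f i t)"
  unfolding VV_def Vc_def using Bb_open by auto

lemma VV_sub: "VV f i t \<subseteq> t"
proof
  fix q assume "q \<in> VV f i t"
  then obtain z where "(\<forall>w. Ch i 4 z w \<longrightarrow> w \<in> t)" "Rr i z q" using mem_VV by blast
  then show "q \<in> t" using Ch4[OF Rr_refl Rr_refl Rr_refl] by blast
qed

lemma VV_cover:
  assumes "x \<notin> isolated_pts" "open (f x)" "x \<in> f x"
  shows "\<exists>n s. x \<in> VV f n s"
proof -
  obtain n where n: "\<forall>y. Ch n 4 x y \<longrightarrow> y \<in> f x" using P[OF assms(1) assms(2,3)] by blast
  show ?thesis
  proof (cases "x \<in> Cov f n")
    case True
    then show ?thesis
    proof (induction n)
      case 0 then show ?case by simp
    next
      case (Suc n)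
      then show ?case unfolding VV_def by auto
    qed
  next
    case False
    have "x \<in> Bb n x" using Rr_refl by (simp add: Bb_def)
    moreover have "Bb n x \<in> {Bb n y | y. y \<notin> isolated_pts \<and> f y = f x \<and> y \<notin> Cov f n \<and> (\<forall>z. Ch n 4 y z \<longrightarrow> z \<in> f x)}"
      using assms(1) False n by blast
    ultimately have "x \<in> VV f n (f x)" unfolding VV_def Vc_def by blast
    then show ?thesis by blast
  qed
qed

context
  fixes f :: "'a \<Rightarrow> 'a set"
  assumes ORD: "\<And>y z. f y \<noteq> f z \<Longrightarrow> z \<notin> f y \<or> y \<notin> f z"
begin

lemma sep:
  assumes "p \<in> VV f i s" "q \<in> VV f i t" "Rr i x p" "Rr i x q"
  shows "s = t"
proof -
  obtain y where y: "f y = s" "\<forall>w. Ch i 4 y w \<longrightarrow> w \<in> s" "Rr i y p" using mem_VV[OF assms(1)] by blast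
  obtain z where z: "f z = t" "\<forall>w. Ch i 4 z w \<longrightarrow> w \<in> t" "Rr i z q" using mem_VV[OF assms(2)] by blast
  have "Ch i 4 y z" by (rule Ch4[OF y(3) Rr_sym[OF assms(3)] assms(4) Rr_sym[OF z(3)]])
  moreover have "Ch i 4 z y" by (rule Ch4[OF z(3) Rr_sym[OF assms(4)] assms(3) Rr_sym[OF y(3)]])
  ultimately have "z \<in> f y" "y \<in> f z" using y z by auto
  then show ?thesis using ORD y(1) z(1) by blast
qed

lemma atmost1_finite: "(\<And>a b. a \<in> A \<Longrightarrow> b \<in> A \<Longrightarrow> a = b) \<Longrightarrow> finite A"
proof (cases "A = {}")
  case False
  assume h: "\<And>a b. a \<in> A \<Longrightarrow> b \<in> A \<Longrightarrow> a = b"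
  obtain a where "a \<in> A" using False by blast
  then have "A \<subseteq> {a}" using h by blast
  then show ?thesis using finite_subset by blast
qed simp

lemma loc_fin:
  assumes "x \<notin> isolated_pts" "x \<in> VV f n s"
  shows "\<exists>Ob. open Ob \<and> x \<in> Ob \<and> finite {V \<in> {VV f i t | i t. t \<in> \<U>}. V \<inter> Ob \<noteq> {}}"
proof -
  obtain j where j: "\<forall>y. Ch j 2 x y \<longrightarrow> y \<in> VV f n s"
    using P[OF assms(1) VV_open assms(2)] by blast
  define m where "m = Suc (n + j)"
  define Ob where "Ob = Bb m x"
  have A: "VV f i t \<inter> Ob = {}" if mi: "m \<le> i" for i t
  proof (rule ccontr)
    assume "VV f i t \<inter> Ob \<noteq> {}"
    then obtain q where q: "q \<in> VV f i t" "Rr m x q" unfolding Ob_def Bb_def by auto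
    obtain z where z: "z \<notin> Cov f i" "Rr i z q" using mem_VV[OF q(1)] by blast
    have ji: "j \<le> i" using m_def mi by simp
    have ji2: "j \<le> m" using m_def by simp
    have ni: "n < i" using m_def mi by simp
    have "Rr j x q" by (rule Rr_mono[OF q(2) ji2])
    moreover have "Rr j q z" by (rule Rr_mono[OF Rr_sym[OF z(2)] ji])
    ultimately have "z \<in> VV f n s" using j Ch2[of j x q z] by blast
    moreover have "VV f n s \<subseteq> Cov f i" by (rule VV_Cov[OF ni])
    ultimately show False using z(1) by blast
  qed
  have Bx: "t1 = t2" if th: "i < m" "VV f i t1 \<inter> Ob \<noteq> {}" "VV f i t2 \<inter> Ob \<noteq> {}" for i t1 t2
  proof -
    obtain p where "p \<in> VV f i t1" "Rr m x p" using th(2) unfolding Ob_def Bb_def by auto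
    moreover obtain q where "q \<in> VV f i t2" "Rr m x q" using th(3) unfolding Ob_def Bb_def by auto
    ultimately show ?thesis using sep Rr_mono[OF _ less_imp_le[OF th(1)]] by blast
  qed
  have "{V \<in> {VV f i t | i t. t \<in> \<U>}. V \<inter> Ob \<noteq> {}} \<subseteq> (\<Union>i\<in>{..<m}. {VV f i t | t. VV f i t \<inter> Ob \<noteq> {}})"
  proof
    fix V assume "V \<in> {V \<in> {VV f i t | i t. t \<in> \<U>}. V \<inter> Ob \<noteq> {}}"
    then obtain i t where V: "V = VV f i t" "VV f i t \<inter> Ob \<noteq> {}" by blast
    then have "i < m" using A not_less by blast
    then show "V \<in> (\<Union>i\<in>{..<m}. {VV f i t | t. VV f i t \<inter> Ob \<noteq> {}})" using V by blast
  qed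
  moreover have "finite (\<Union>i\<in>{..<m}. {VV f i t | t. VV f i t \<inter> Ob \<noteq> {}})"
  proof (rule finite_UN_I)
    fix i assume "i \<in> {..<m}"
    then show "finite {VV f i t | t. VV f i t \<inter> Ob \<noteq> {}}"
      using Bx by (intro atmost1_finite) auto
  qed simp
  ultimately have "finite {V \<in> {VV f i t | i t. t \<in> \<U>}. V \<inter> Ob \<noteq> {}}" by (rule finite_subset)
  moreover have "open Ob" unfolding Ob_def by (rule Bb_open)
  moreover have "x \<in> Ob" unfolding Ob_def Bb_def using Rr_refl by simp
  ultimately show ?thesis by blast
qed

end

lemma mono_normal: "monotonically_normal TYPE('a)"
  unfolding monotonically_normal_def
  apply (rule exI[of _ HH])
  using HH1 HH2 HH3 by blast


lemma paracomp: "paracompact TYPE('a)"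
  unfolding paracompact_def
proof (intro conjI allI impI)
  fix x y :: 'a assume "x \<noteq> y"
  then show "\<exists>U V. open U \<and> open V \<and> x \<in> U \<and> y \<in> V \<and> U \<inter> V = {}"
    using HH1[of "{y}" x] HH1[of "{x}" y] HH3[of x y]
    by (intro exI[of _ "HH x {y}"] exI[of _ "HH y {x}"]) auto
next
  fix \<U> :: "'a set set" assume cov: "open_cover \<U>"
  then have UU: "\<Union>\<U> = UNIV" and Uo: "\<forall>U\<in>\<U>. open U" by (auto simp: open_cover_def)
  obtain f where f: "\<forall>x. x \<in> f x \<and> f x \<in> \<U>" and ord: "\<forall>y z. f y \<noteq> f z \<longrightarrow> z \<notin> f y \<or> y \<notin> f z"
    using first_exists[OF UU] by blast
  define \<V>' where "\<V>' = {VV f i t | i t. t \<in> \<U>}"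
  have inV: "\<exists>V\<in>\<V>'. y \<in> V" if yN: "y \<notin> isolated_pts" for y
  proof -
    obtain n s where "y \<in> VV f n s" using VV_cover[OF yN] f Uo by blast
    moreover have "s \<in> \<U>" using mem_VV[OF \<open>y \<in> VV f n s\<close>] f by blast
    ultimately show ?thesis unfolding \<V>'_def by blast
  qed
  have lf: "\<exists>Ob. open Ob \<and> y \<in> Ob \<and> finite {V \<in> \<V>'. V \<inter> Ob \<noteq> {}}" if yN: "y \<notin> isolated_pts" for y
  proof -
    obtain n s where "y \<in> VV f n s" using VV_cover[OF yN] f Uo by blast
    then show ?thesis using loc_fin[of f y n s \<U>] ord yN unfolding \<V>'_def by blast
  qed
  then obtain Of where Of: "\<And>y. y \<notin> isolated_pts \<Longrightarrow> open (Of y) \<and> y \<in> Of y \<and> finite {V \<in> \<V>'. V \<inter> Of y \<noteq> {}}"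
    by metis
  define Ou where "Ou = \<Union>(Of ` (-isolated_pts))"
  define \<V>1 where "\<V>1 = (\<lambda>V. V \<inter> Ou) ` \<V>'"
  define E where "E = \<Union>\<V>1"
  define \<V> where "\<V> = \<V>1 \<union> {{x} | x. x \<notin> E}"
  have Ouo: "open Ou" unfolding Ou_def using Of by auto
  have V'o: "\<forall>V\<in>\<V>'. open V" unfolding \<V>'_def using VV_open by auto
  have V1o: "\<forall>V\<in>\<V>1. open V" unfolding \<V>1_def using V'o Ouo by auto
  have Eo: "open E" unfolding E_def using V1o by auto
  have NE: "y \<in> E" if "y \<notin> isolated_pts" for y
    using inV[OF that] Of[OF that] unfolding E_def \<V>1_def Ou_def using that by blast
  have "open_cover \<V>"
    unfolding open_cover_def
  proof
    show "\<forall>V\<in>\<V>. open V"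
      unfolding \<V>_def using V1o NE by (auto simp: isolated_pts_def)
    show "\<Union>\<V> = UNIV" unfolding \<V>_def E_def by auto
  qed
  moreover have "\<forall>V\<in>\<V>. \<exists>U\<in>\<U>. V \<subseteq> U"
  proof
    fix V assume "V \<in> \<V>"
    then show "\<exists>U\<in>\<U>. V \<subseteq> U"
    proof (cases "V \<in> \<V>1")
      case True
      then obtain i t where "t \<in> \<U>" "V \<subseteq> VV f i t" unfolding \<V>1_def \<V>'_def by auto
      then show ?thesis using VV_sub by blast
    next
      case False
      then obtain x where "V = {x}" using \<open>V \<in> \<V>\<close> unfolding \<V>_def by auto
      then show ?thesis using f by blast
    qed
  qed
  moreover have "locally_finite_family \<V>"
    unfolding locally_finite_family_def
  proof
    fix x
    show "\<exists>Ob. open Ob \<and> x \<in> Ob \<and> finite {V \<in> \<V>. V \<inter> Ob \<noteq> {}}"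
    proof (cases "x \<in> isolated_pts")
      case False
      have "{V \<in> \<V>. V \<inter> (Of x \<inter> E) \<noteq> {}} \<subseteq> (\<lambda>V. V \<inter> Ou) ` {V \<in> \<V>'. V \<inter> Of x \<noteq> {}}"
        unfolding \<V>_def \<V>1_def by auto
      moreover have "finite ((\<lambda>V. V \<inter> Ou) ` {V \<in> \<V>'. V \<inter> Of x \<noteq> {}})" using Of[OF False] by auto
      ultimately have "finite {V \<in> \<V>. V \<inter> (Of x \<inter> E) \<noteq> {}}" by (rule finite_subset)
      then show ?thesis using Of[OF False] NE[OF False] Eo by (intro exI[of _ "Of x \<inter> E"]) auto
    next
      case True
      have fin: "finite {V \<in> \<V>'. x \<in> V \<inter> Ou}"
      proof (cases "x \<in> Ou")
        case True
        then obtain y where y: "y \<notin> isolated_pts" "x \<in> Of y" unfolding Ou_def by auto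
        have "{V \<in> \<V>'. x \<in> V \<inter> Ou} \<subseteq> {V \<in> \<V>'. V \<inter> Of y \<noteq> {}}" using y by auto
        then show ?thesis using Of[OF y(1)] finite_subset by blast
      qed simp
      have "{V \<in> \<V>. V \<inter> {x} \<noteq> {}} \<subseteq> (\<lambda>V. V \<inter> Ou) ` {V \<in> \<V>'. x \<in> V \<inter> Ou} \<union> {{x}}"
        unfolding \<V>_def \<V>1_def by auto
      moreover have "finite ((\<lambda>V. V \<inter> Ou) ` {V \<in> \<V>'. x \<in> V \<inter> Ou} \<union> {{x}})" using fin by auto
      ultimately have "finite {V \<in> \<V>. V \<inter> {x} \<noteq> {}}" by (rule finite_subset)
      then show ?thesis using True by (intro exI[of _ "{x}"]) (auto simp: isolated_pts_def)
    qed
  qed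
  ultimately show "\<exists>\<V>. open_cover \<V> \<and> (\<forall>V\<in>\<V>. \<exists>U\<in>\<U>. V \<subseteq> U) \<and> locally_finite_family \<V>" by blast
qed

end

theorem mainTheorem4:
  assumes "has_strong_development_nonisolated TYPE('a::t1_space)"
  shows "monotonically_normal TYPE('a) \<and> paracompact TYPE('a)"
proof -
  obtain W :: "nat \<Rightarrow> 'a set set" where "strong_development_nonisolated W"
    using assms unfolding has_strong_development_nonisolated_def by blast
  then interpret sdev W by unfold_locales
  show ?thesis by (rule conjI[OF mono_normal paracomp])
qed

end
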